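(* Let $\rho\in\mathbb P^N$ and let $i,j\in N$ with $i\neq j$. (a) Let $\rho^{-ij}=\rho_{g_N-ij}$. Then for every network $g\in\mathbb G^N$: $\rho^{-ij}(g)=\rho(g)+\rho(g+ij)$ if $ij\notin g$, and $\rho^{-ij}(g)=0$ if $ij\in g$. Furthermore $g(\rho^{-ij})=g(\rho)-ij$ and $\mathbb G(\rho^{-ij})=\{g\in\mathbb G^N: ij\notin g \text{ and } \mathbb G(\rho)\cap\{g,g+ij\}\neq\varnothing\}$. (b) Let $\rho^{-i}=\rho_{g_{N-i}}$ where $g_{N-i}=g_N\setminus L_i(g_N)$. Then for every network $g\subseteq g_{N-i}$, $\rho^{-i}(g)=\rho(g)+\sum_{\varnothing\neq h\subseteq L_i(g(\rho))}\rho(g\cup h)$, and for every $g\not\subseteq g_{N-i}$, $\rho^{-i}(g)=0$. Furthermore $g(\rho^{-i})=g(\rho)\setminus L_i(g_N)$ and $\mathbb G(\rho^{-i})=\{g\in\mathbb G^N: g\cap L_i(g_N)=\varnothing \text{ and } \mathbb G(\rho)\cap\{g\cup h: h\subseteq L_i(g_N)\}\neq\varnothing\}$.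
   Context: $N=\{1,\dots,n\}$ is a finite player set. A link is an unordered pair $ij=\{i,j\}$ of distinct players; $g_N$ is the set of all links; a network is any $g\subseteq g_N$; $\mathbb G^N$ is the set of all networks. For a network $g$, $L_i(g)=\{ij\in g\}$ is the set of links of player $i$ in $g$; $g+ij=g\cup\{ij\}$ and $g-ij=g\setminus\{ij\}$. A network formation probability distribution is a map $\rho\colon\mathbb G^N\to[0,1]$ with $\sum_{g\in\mathbb G^N}\rho(g)=1$; $\mathbb P^N$ is the set of these. $\mathbb G(\rho)=\{g:\rho(g)>0\}$ is the set of formable networks and the extent is $g(\rho)=\bigcup_{g\in\mathbb G(\rho)}g$. For a network $g$, the restriction of $\rho$ to $g$ is $\rho_g\in\mathbb P^N$ with $\rho_g(h)=\sum_{h'\subseteq g_N\setminus g}\rho(h\cup h')$ if $h\subseteq g$ and $\rho_g(h)=0$ otherwise. *)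

theory Defs
  imports Complex_Main
begin

type_synonym link = "nat set"
type_synonym network = "link set"

definition players :: "nat \<Rightarrow> nat set" where
  "players n = {1..n}"

definition link :: "nat \<Rightarrow> nat \<Rightarrow> link" where
  "link i j = {i, j}"

definition complete_net :: "nat \<Rightarrow> network" where
  "complete_net n = {link i j | i j. i \<in> players n \<and> j \<in> players n \<and> i \<noteq> j}"

definition networks :: "nat \<Rightarrow> network set" where
  "networks n = Pow (complete_net n)"

definition links_of :: "nat \<Rightarrow> network \<Rightarrow> network" where
  "links_of i g = {l \<in> g. i \<in> l}"

definition prob_dists :: "nat \<Rightarrow> (network \<Rightarrow> real) set" where
  "prob_dists n = {\<rho>. (\<forall>g. 0 \<le> \<rho> g \<and> \<rho> g \<le> 1) \<and> (\<forall>g. g \<notin> networks n \<longrightarrow> \<rho> g = 0)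
                        \<and> (\<Sum>g\<in>networks n. \<rho> g) = 1}"

definition formable :: "nat \<Rightarrow> (network \<Rightarrow> real) \<Rightarrow> network set" where
  "formable n \<rho> = {g \<in> networks n. \<rho> g > 0}"

definition extent :: "nat \<Rightarrow> (network \<Rightarrow> real) \<Rightarrow> network" where
  "extent n \<rho> = \<Union> (formable n \<rho>)"

definition restrict_dist :: "nat \<Rightarrow> (network \<Rightarrow> real) \<Rightarrow> network \<Rightarrow> (network \<Rightarrow> real)" where
  "restrict_dist n \<rho> g = (\<lambda>h. if h \<subseteq> g then (\<Sum>h'\<in>Pow (complete_net n - g). \<rho> (h \<union> h')) else 0)"

end

theory Submission
  imports Defs
begin

lemma fin_C: "finite (complete_net n)"
proof -
  have "complete_net n \<subseteq> (\<lambda>(i,j). link i j) ` (players n \<times> players n)"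
    unfolding complete_net_def by auto
  moreover have "finite (players n)" by (simp add: players_def)
  ultimately show ?thesis by (meson finite_SigmaI finite_imageI finite_subset)
qed

lemma link_in_C: "i \<in> players n \<Longrightarrow> j \<in> players n \<Longrightarrow> i \<noteq> j \<Longrightarrow> link i j \<in> complete_net n"
  unfolding complete_net_def by blast

lemma pd_nonneg: "\<rho> \<in> prob_dists n \<Longrightarrow> 0 \<le> \<rho> g"
  unfolding prob_dists_def by auto

lemma pd_pos_net: "\<rho> \<in> prob_dists n \<Longrightarrow> \<rho> g > 0 \<Longrightarrow> g \<in> networks n"
  unfolding prob_dists_def by force

lemma pd_pos_form: "\<rho> \<in> prob_dists n \<Longrightarrow> \<rho> g > 0 \<Longrightarrow> g \<in> formable n \<rho>"
  using pd_pos_net unfolding formable_def by blast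

lemma pd_pos_ext: "\<rho> \<in> prob_dists n \<Longrightarrow> \<rho> g > 0 \<Longrightarrow> g \<subseteq> extent n \<rho>"
  using pd_pos_form unfolding extent_def by blast

lemma ext_sub: "extent n \<rho> \<subseteq> complete_net n"
  unfolding extent_def formable_def networks_def by auto

lemma restrict_pos:
  assumes "\<rho> \<in> prob_dists n" "h \<subseteq> g"
  shows "restrict_dist n \<rho> g h > 0 \<longleftrightarrow> (\<exists>h'\<subseteq>complete_net n - g. \<rho> (h \<union> h') > 0)"
proof -
  have fin: "finite (Pow (complete_net n - g))" using fin_C by simp
  have nn: "\<forall>x\<in>Pow (complete_net n - g). 0 \<le> \<rho> (h \<union> x)" using pd_nonneg[OF assms(1)] by blast
  have "(\<Sum>h'\<in>Pow (complete_net n - g). \<rho> (h \<union> h')) > 0 \<longleftrightarrow> (\<exists>h'\<in>Pow (complete_net n - g). \<rho> (h \<union> h') > 0)"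
  proof
    assume "(\<Sum>h'\<in>Pow (complete_net n - g). \<rho> (h \<union> h')) > 0"
    then have "(\<Sum>h'\<in>Pow (complete_net n - g). \<rho> (h \<union> h')) \<noteq> 0" by simp
    then obtain x where "x \<in> Pow (complete_net n - g)" "\<rho> (h \<union> x) \<noteq> 0"
      using sum.neutral by metis
    then show "\<exists>h'\<in>Pow (complete_net n - g). \<rho> (h \<union> h') > 0"
      using nn by (metis less_eq_real_def)
  next
    assume "\<exists>h'\<in>Pow (complete_net n - g). \<rho> (h \<union> h') > 0"
    then obtain x where x: "x \<in> Pow (complete_net n - g)" "\<rho> (h \<union> x) > 0" by blast
    show "(\<Sum>h'\<in>Pow (complete_net n - g). \<rho> (h \<union> h')) > 0"
      by (rule sum_pos2[where f="\<lambda>h'. \<rho> (h \<union> h')", OF fin x(1)]) (use x nn in auto)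
  qed
  then show ?thesis using assms(2) unfolding restrict_dist_def by auto
qed

lemma restrict_nonneg: "\<rho> \<in> prob_dists n \<Longrightarrow> 0 \<le> restrict_dist n \<rho> g h"
  unfolding restrict_dist_def using pd_nonneg by (auto intro: sum_nonneg)

lemma formable_restrict:
  assumes "\<rho> \<in> prob_dists n"
  shows "formable n (restrict_dist n \<rho> g) = {h \<in> networks n. h \<subseteq> g \<and> (\<exists>h'\<subseteq>complete_net n - g. \<rho> (h \<union> h') > 0)}"
  unfolding formable_def using restrict_pos[OF assms]
  by (auto simp: restrict_dist_def)

theorem proposition1:
  fixes n :: nat and \<rho> :: "network \<Rightarrow> real" and i j :: nat
  assumes "\<rho> \<in> prob_dists n"
    and "i \<in> players n" and "j \<in> players n" and "i \<noteq> j"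
  shows
   "(let \<rho>ij = restrict_dist n \<rho> (complete_net n - {link i j}) in
      (\<forall>g \<in> networks n.
         \<rho>ij g = (if link i j \<notin> g then \<rho> g + \<rho> (insert (link i j) g) else 0))
    \<and> extent n \<rho>ij = extent n \<rho> - {link i j}
    \<and> formable n \<rho>ij = {g \<in> networks n. link i j \<notin> g
                            \<and> formable n \<rho> \<inter> {g, insert (link i j) g} \<noteq> {}})
  \<and> (let gNi = complete_net n - links_of i (complete_net n);
        \<rho>i = restrict_dist n \<rho> gNi in
      (\<forall>g. g \<subseteq> gNi \<longrightarrow>
         \<rho>i g = \<rho> g + (\<Sum>h\<in>{h. h \<subseteq> links_of i (extent n \<rho>) \<and> h \<noteq> {}}. \<rho> (g \<union> h)))
    \<and> (\<forall>g \<in> networks n. \<not> g \<subseteq> gNi \<longrightarrow> \<rho>i g = 0)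
    \<and> extent n \<rho>i = extent n \<rho> - links_of i (complete_net n)
    \<and> formable n \<rho>i = {g \<in> networks n. g \<inter> links_of i (complete_net n) = {}
                     \<and> formable n \<rho> \<inter> {g \<union> h | h. h \<subseteq> links_of i (complete_net n)} \<noteq> {}})"
proof -
  note P = assms(1)
  define C where "C = complete_net n"
  define l where "l = link i j"
  have lC: "l \<in> C" unfolding l_def C_def using link_in_C assms by blast
  have CC: "C - (C - {l}) = {l}" using lC by auto
  have finC: "finite C" unfolding C_def by (rule fin_C)
  have RD: "\<And>g h. restrict_dist n \<rho> g h = (if h \<subseteq> g then (\<Sum>h'\<in>Pow (C - g). \<rho> (h \<union> h')) else 0)"
    unfolding restrict_dist_def C_def ..
  have netC: "networks n = Pow C" unfolding networks_def C_def ..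
  have posform: "\<And>x. \<rho> x > 0 \<longleftrightarrow> x \<in> formable n \<rho>" unfolding formable_def using pd_pos_net[OF P] by auto
  have formsub: "\<And>x. x \<in> formable n \<rho> \<Longrightarrow> x \<subseteq> C" unfolding formable_def netC by auto
  have A1: "\<forall>g \<in> networks n. restrict_dist n \<rho> (C - {l}) g = (if l \<notin> g then \<rho> g + \<rho> (insert l g) else 0)"
  proof
    fix g assume g: "g \<in> networks n"
    show "restrict_dist n \<rho> (C - {l}) g = (if l \<notin> g then \<rho> g + \<rho> (insert l g) else 0)"
    proof (cases "l \<in> g")
      case True then show ?thesis unfolding RD by auto
    next
      case False
      then have "g \<subseteq> C - {l}" using g netC by auto
      moreover have "Pow {l} = {{}, {l}}" by auto
      ultimately show ?thesis using False unfolding RD CC by auto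
    qed
  qed
  have A3: "formable n (restrict_dist n \<rho> (C - {l})) = {g \<in> networks n. l \<notin> g \<and> formable n \<rho> \<inter> {g, insert l g} \<noteq> {}}"
  proof -
    have F1: "\<And>g. g \<in> networks n \<Longrightarrow> g \<subseteq> C - {l} \<Longrightarrow> (\<exists>h'\<subseteq>C - (C - {l}). \<rho> (g \<union> h') > 0) \<longleftrightarrow> formable n \<rho> \<inter> {g, insert l g} \<noteq> {}"
    proof -
      fix g
      have "(\<exists>h'\<subseteq>{l}. \<rho> (g \<union> h') > 0) \<longleftrightarrow> \<rho> g > 0 \<or> \<rho> (insert l g) > 0"
        by (metis Un_empty_right insert_is_Un subset_singletonD sup_commute empty_subsetI order_refl)
      then show "(\<exists>h'\<subseteq>C - (C - {l}). \<rho> (g \<union> h') > 0) \<longleftrightarrow> formable n \<rho> \<inter> {g, insert l g} \<noteq> {}"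
        unfolding CC using posform by blast
    qed
    have F2: "\<And>g. g \<in> networks n \<Longrightarrow> g \<subseteq> C - {l} \<longleftrightarrow> l \<notin> g" using netC by auto
    show ?thesis unfolding formable_restrict[OF P, folded C_def]
    proof (rule set_eqI)
      fix g
      show "g \<in> {h \<in> networks n. h \<subseteq> C - {l} \<and> (\<exists>h'\<subseteq>C - (C - {l}). 0 < \<rho> (h \<union> h'))} \<longleftrightarrow>
        g \<in> {g \<in> networks n. l \<notin> g \<and> formable n \<rho> \<inter> {g, insert l g} \<noteq> {}}"
        using F1[of g] F2[of g] by auto
    qed
  qed
  have A2: "extent n (restrict_dist n \<rho> (C - {l})) = extent n \<rho> - {l}"
  proof
    show "extent n (restrict_dist n \<rho> (C - {l})) \<subseteq> extent n \<rho> - {l}"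
      unfolding extent_def[of n "restrict_dist n \<rho> (C - {l})"] A3
      by (auto simp: extent_def)
  next
    show "extent n \<rho> - {l} \<subseteq> extent n (restrict_dist n \<rho> (C - {l}))"
    proof
      fix x assume "x \<in> extent n \<rho> - {l}"
      then obtain g where g: "g \<in> formable n \<rho>" "x \<in> g" "x \<noteq> l" unfolding extent_def by auto
      have "g - {l} \<in> formable n (restrict_dist n \<rho> (C - {l}))"
        unfolding A3
      proof (cases "l \<in> g")
        case True
        then have "insert l (g - {l}) = g" by auto
        then show "g - {l} \<in> {g \<in> networks n. l \<notin> g \<and> formable n \<rho> \<inter> {g, insert l g} \<noteq> {}}"
          using g formsub[OF g(1)] netC by auto
      next
        case False
        then have "g - {l} = g" by auto
        then show "g - {l} \<in> {g \<in> networks n. l \<notin> g \<and> formable n \<rho> \<inter> {g, insert l g} \<noteq> {}}"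
          using g formsub[OF g(1)] netC False by auto
      qed
      then show "x \<in> extent n (restrict_dist n \<rho> (C - {l}))" unfolding extent_def using g by blast
    qed
  qed
  define Li where "Li = links_of i C"
  define gNi where "gNi = C - Li"
  have CG: "C - gNi = Li" unfolding gNi_def Li_def links_of_def by auto
  define E where "E = extent n \<rho>"
  have EC: "E \<subseteq> C" unfolding E_def C_def by (rule ext_sub)
  have B1: "\<forall>g. g \<subseteq> gNi \<longrightarrow> restrict_dist n \<rho> gNi g = \<rho> g + (\<Sum>h\<in>{h. h \<subseteq> links_of i E \<and> h \<noteq> {}}. \<rho> (g \<union> h))"
  proof (intro allI impI)
    fix g assume g: "g \<subseteq> gNi"
    have sub: "Pow (links_of i E) \<subseteq> Pow Li" unfolding Li_def links_of_def using EC by auto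
    have finLi: "finite (Pow Li)" unfolding Li_def links_of_def using finC by simp
    have "(\<Sum>h\<in>Pow Li. \<rho> (g \<union> h)) = (\<Sum>h\<in>Pow (links_of i E). \<rho> (g \<union> h))"
    proof (rule sum.mono_neutral_right[OF finLi sub], rule ballI)
      fix h assume h: "h \<in> Pow Li - Pow (links_of i E)"
      then obtain x where x: "x \<in> h" "x \<notin> E" unfolding Li_def links_of_def by auto
      have "\<not> \<rho> (g \<union> h) > 0"
      proof
        assume "\<rho> (g \<union> h) > 0"
        then have "g \<union> h \<subseteq> E" unfolding E_def by (rule pd_pos_ext[OF P])
        then show False using x by auto
      qed
      then show "\<rho> (g \<union> h) = 0" using pd_nonneg[OF P, of "g \<union> h"] by linarith
    qed
    also have "Pow (links_of i E) = insert {} {h. h \<subseteq> links_of i E \<and> h \<noteq> {}}" by auto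
    also have "(\<Sum>h\<in>insert {} {h. h \<subseteq> links_of i E \<and> h \<noteq> {}}. \<rho> (g \<union> h))
        = \<rho> g + (\<Sum>h\<in>{h. h \<subseteq> links_of i E \<and> h \<noteq> {}}. \<rho> (g \<union> h))"
    proof (subst sum.insert)
      show "finite {h. h \<subseteq> links_of i E \<and> h \<noteq> {}}"
        using finC EC unfolding links_of_def by (auto intro: finite_subset[of _ "Pow C"])
    qed auto
    finally show "restrict_dist n \<rho> gNi g = \<rho> g + (\<Sum>h\<in>{h. h \<subseteq> links_of i E \<and> h \<noteq> {}}. \<rho> (g \<union> h))"
      using g unfolding RD CG by simp
  qed
  have B2: "\<forall>g \<in> networks n. \<not> g \<subseteq> gNi \<longrightarrow> restrict_dist n \<rho> gNi g = 0"
    unfolding RD by auto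
  have B4: "formable n (restrict_dist n \<rho> gNi) = {g \<in> networks n. g \<inter> Li = {} \<and> formable n \<rho> \<inter> {g \<union> h | h. h \<subseteq> Li} \<noteq> {}}"
  proof -
    have F2: "\<And>g. g \<in> networks n \<Longrightarrow> g \<subseteq> gNi \<longleftrightarrow> g \<inter> Li = {}" using netC unfolding gNi_def by auto
    have F1: "\<And>g. (\<exists>h'\<subseteq>C - gNi. \<rho> (g \<union> h') > 0) \<longleftrightarrow> formable n \<rho> \<inter> {g \<union> h | h. h \<subseteq> Li} \<noteq> {}"
      unfolding CG using posform by blast
    show ?thesis unfolding formable_restrict[OF P, folded C_def]
    proof (rule set_eqI)
      fix g
      show "g \<in> {h \<in> networks n. h \<subseteq> gNi \<and> (\<exists>h'\<subseteq>C - gNi. 0 < \<rho> (h \<union> h'))} \<longleftrightarrow>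
        g \<in> {g \<in> networks n. g \<inter> Li = {} \<and> formable n \<rho> \<inter> {g \<union> h | h. h \<subseteq> Li} \<noteq> {}}"
        using F1[of g] F2[of g] by auto
    qed
  qed
  have B3: "extent n (restrict_dist n \<rho> gNi) = extent n \<rho> - Li"
  proof
    show "extent n (restrict_dist n \<rho> gNi) \<subseteq> extent n \<rho> - Li"
      unfolding extent_def[of n "restrict_dist n \<rho> gNi"] B4
      by (auto simp: extent_def)
  next
    show "extent n \<rho> - Li \<subseteq> extent n (restrict_dist n \<rho> gNi)"
    proof
      fix x assume "x \<in> extent n \<rho> - Li"
      then obtain g where g: "g \<in> formable n \<rho>" "x \<in> g" "x \<notin> Li" unfolding extent_def by auto
      have "g = (g - Li) \<union> (g \<inter> Li)" by auto
      moreover have "g \<inter> Li \<subseteq> Li" by auto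
      ultimately have "g \<in> formable n \<rho> \<inter> {(g - Li) \<union> h | h. h \<subseteq> Li}" using g by blast
      then have "g - Li \<in> formable n (restrict_dist n \<rho> gNi)"
        unfolding B4 using formsub[OF g(1)] netC by blast
      then show "x \<in> extent n (restrict_dist n \<rho> gNi)" unfolding extent_def using g by blast
    qed
  qed
  show ?thesis
    using conjI[OF conjI[OF A1 conjI[OF A2 A3]] conjI[OF B1 conjI[OF B2 conjI[OF B3 B4]]]]
    unfolding Let_def gNi_def Li_def E_def C_def l_def
    by assumption
qed

end
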